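(* Let $d\ge3$ and let $(X_{t,1},\dots,X_{t,d})$, $t=1,\dots,T$, be i.i.d. binary random vectors, each following a determinantal point process with correlation kernel $K_0^*$, where $K_0^*$ is real symmetric with all eigenvalues in $(0,1)$, all entries of $K_0^*$ are nonzero, and $K^*_{0,1i}>0$ for $i=2,\dots,d$. Define the estimator $\widehat{K^*_T}$ (a symmetric matrix) by $\widehat{K^*_{ii}}=\frac1T\sum_{t=1}^T X_{t,i}$; for $i<j$, $\widehat{|K^*_{ij}|}=\sqrt{-\widehat{\mathrm{Cov}}(X_i,X_j)}$ with $-\widehat{\mathrm{Cov}}(X_i,X_j)=\widehat{K^*_{ii}}\widehat{K^*_{jj}}-\frac1T\sum_{t=1}^T X_{t,i}X_{t,j}$; $\widehat{K^*_{1j}}=\widehat{|K^*_{1j}|}$ for $j\ge2$; for $1<i<j\le d$, $\widehat{K^*_{ij}}=\widehat{\mathrm{sgn}}_{ij}\cdot\widehat{|K^*_{ij}|}$, where $$\widehat{\mathrm{sgn}}_{ij}=\mathrm{sgn}\Big(\tfrac1T\textstyle\sum_{t}X_{t,1}X_{t,i}X_{t,j}-\widehat{K^*_{11}}\widehat{K^*_{ii}}\widehat{K^*_{jj}}+\widehat{K^*_{11}}\widehat{|K^*_{ij}|}^2+\widehat{K^*_{ii}}\widehat{|K^*_{1j}|}^2+\widehat{K^*_{jj}}\widehat{|K^*_{1i}|}^2\Big);$$ and $\widehat{K^*_{ji}}=\widehat{K^*_{ij}}$. Then $\widehat{K^*_T}\to K_0^*$ almost surely as $T\to\infty$. In particular,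 almost surely, for all $T$ large enough: $-\widehat{\mathrm{Cov}}(X_i,X_j)\ge0$ for all $i<j$ (so $\widehat{|K^*_{ij}|}$ is well defined), and $\mathrm{sgn}(\widehat{K^*_{ij}})=\mathrm{sgn}(K^*_{0,ij})$ for all $i,j$.
   Context: A binary random vector $(X_1,\dots,X_d)$ follows a determinantal point process with correlation kernel $K$ if $\mathbb{P}[X_j=1\ \forall j\in s]=\det K_s$ for every $s\subseteq\{1,\dots,d\}$, where $K_s$ is the principal submatrix of $K$ with rows and columns in $s$. $\mathrm{sgn}(x)$ is $1,-1,0$ according as $x>0$, $x<0$, $x=0$. For finitely many $T$ the defining expressions may be undefined (negative quantity under a square root, or zero sign); the value of the estimator on that event is fixed by an arbitrary convention and plays no role in the statement. *)

theory Defs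
  imports "HOL-Probability.Probability" "HOL-Combinatorics.Permutations"
begin

text \<open>Matrices are functions nat => nat => real; only indices in {1..d} matter.\<close>

definition det_on :: "nat set \<Rightarrow> (nat \<Rightarrow> nat \<Rightarrow> real) \<Rightarrow> real" where
  "det_on s K = (\<Sum>p\<in>{p. p permutes s}. of_int (sign p) * (\<Prod>i\<in>s. K i (p i)))"

definition is_eigenvalue :: "nat \<Rightarrow> (nat \<Rightarrow> nat \<Rightarrow> real) \<Rightarrow> real \<Rightarrow> bool" where
  "is_eigenvalue d K lam \<longleftrightarrow> (\<exists>v::nat \<Rightarrow> real. (\<exists>i\<in>{1..d}. v i \<noteq> 0) \<and>
      (\<forall>i\<in>{1..d}. (\<Sum>j\<in>{1..d}. K i j * v j) = lam * v i))"

text \<open>A random binary vector is encoded by the set of coordinates equal to 1;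
  X_{t,j} = xval X t j w.\<close>
definition xval :: "(nat \<Rightarrow> 'a \<Rightarrow> nat set) \<Rightarrow> nat \<Rightarrow> nat \<Rightarrow> 'a \<Rightarrow> real" where
  "xval X t j w = (if j \<in> X t w then 1 else 0)"

text \<open>Sample with observations t = 0,...,T-1.\<close>
definition Kdiag_hat :: "(nat \<Rightarrow> 'a \<Rightarrow> nat set) \<Rightarrow> nat \<Rightarrow> 'a \<Rightarrow> nat \<Rightarrow> real" where
  "Kdiag_hat X T w i = (1 / real T) * (\<Sum>t<T. xval X t i w)"

definition negcov_hat :: "(nat \<Rightarrow> 'a \<Rightarrow> nat set) \<Rightarrow> nat \<Rightarrow> 'a \<Rightarrow> nat \<Rightarrow> nat \<Rightarrow> real" where
  "negcov_hat X T w i j = Kdiag_hat X T w i * Kdiag_hat X T w j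
      - (1 / real T) * (\<Sum>t<T. xval X t i w * xval X t j w)"

definition absK_hat :: "(nat \<Rightarrow> 'a \<Rightarrow> nat set) \<Rightarrow> nat \<Rightarrow> 'a \<Rightarrow> nat \<Rightarrow> nat \<Rightarrow> real" where
  "absK_hat X T w i j = sqrt (negcov_hat X T w i j)"

definition sgn_hat :: "(nat \<Rightarrow> 'a \<Rightarrow> nat set) \<Rightarrow> nat \<Rightarrow> 'a \<Rightarrow> nat \<Rightarrow> nat \<Rightarrow> real" where
  "sgn_hat X T w i j = sgn ((1 / real T) * (\<Sum>t<T. xval X t 1 w * xval X t i w * xval X t j w)
      - Kdiag_hat X T w 1 * Kdiag_hat X T w i * Kdiag_hat X T w j
      + Kdiag_hat X T w 1 * (absK_hat X T w i j)\<^sup>2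
      + Kdiag_hat X T w i * (absK_hat X T w 1 j)\<^sup>2
      + Kdiag_hat X T w j * (absK_hat X T w 1 i)\<^sup>2)"

text \<open>Estimator entries for i < j (index 1 is the reference coordinate).\<close>
definition Kupper_hat :: "(nat \<Rightarrow> 'a \<Rightarrow> nat set) \<Rightarrow> nat \<Rightarrow> 'a \<Rightarrow> nat \<Rightarrow> nat \<Rightarrow> real" where
  "Kupper_hat X T w i j =
     (if i = 1 then absK_hat X T w 1 j else sgn_hat X T w i j * absK_hat X T w i j)"

definition K_hat :: "(nat \<Rightarrow> 'a \<Rightarrow> nat set) \<Rightarrow> nat \<Rightarrow> 'a \<Rightarrow> nat \<Rightarrow> nat \<Rightarrow> real" where
  "K_hat X T w i j =
     (if i = j then Kdiag_hat X T w i else Kupper_hat X T w (min i j) (max i j))"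

end

theory Submission imports Defs begin

lemma slln_bounded:
  fixes M :: "'a measure" and Y :: "nat \<Rightarrow> 'a \<Rightarrow> real" and mu :: real
  assumes P: "prob_space M"
    and ind: "prob_space.indep_vars M (\<lambda>_. borel) Y UNIV"
    and bnd: "\<And>t w. w \<in> space M \<Longrightarrow> Y t w \<in> {0..1}"
    and ex: "\<And>t. prob_space.expectation M (Y t) = mu"
  shows "AE w in M. (\<lambda>T. (1 / real T) * (\<Sum>t<T. Y t w)) \<longlonglongrightarrow> mu"
proof -
  interpret prob_space M by (rule P)
  have meas[measurable]: "\<And>t. Y t \<in> borel_measurable M"
    using ind unfolding indep_vars_def by auto
  define A where "A = (\<lambda>e n. {w \<in> space M. real n * e \<le> \<bar>(\<Sum>t<n. Y t w) - real n * mu\<bar>})"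
  have Ameas[measurable]: "A e n \<in> sets M" for e n unfolding A_def by measurable
  have bound: "prob (A e n) \<le> 2 * exp (-2 * e^2) ^ n" if e: "e > 0" for e n
  proof (cases "n = 0")
    case True
    have "prob (A e 0) \<le> 1" by (rule prob_le_1)
    then show ?thesis using True by (metis True one_le_numeral order_trans power_0 mult_1_right)
  next
    case False
    interpret H: Hoeffding_ineq M "{..<n}" Y "\<lambda>_. 0" "\<lambda>_. 1" "real n * mu"
    proof unfold_locales
      show "indep_vars (\<lambda>_. borel) Y {..<n}"
        by (rule indep_vars_subset[OF ind]) auto
      show "AE x in M. Y i x \<in> {0..1}" for i
        using bnd by auto
      show "real n * mu \<equiv> \<Sum>i<n. expectation (Y i)"
        by (simp add: ex)
    qed auto
    have "prob {x\<in>space M. \<bar>(\<Sum>i<n. Y i x) - real n * mu\<bar> \<ge> real n * e} \<le>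
        2 * exp (-2 * (real n * e)\<^sup>2 / (\<Sum>i<n. (1 - 0)\<^sup>2))"
      by (rule H.Hoeffding_ineq_abs_ge) (use e False in auto)
    also have "(-2 * (real n * e)\<^sup>2 / (\<Sum>i<n. (1 - 0)\<^sup>2)) = real n * (-2 * e^2)"
      using False by (simp add: power2_eq_square field_simps)
    also have "exp (real n * (-2 * e^2)) = exp (-2 * e^2) ^ n"
      by (rule exp_of_nat_mult)
    finally show ?thesis unfolding A_def by simp
  qed
  have ae: "AE w in M. eventually (\<lambda>n. w \<in> space M - A (1 / real (Suc m)) n) sequentially" for m
  proof (rule borel_cantelli_AE1)
    show "A (1 / real (Suc m)) n \<in> sets M" for n by simp
    show "emeasure M (A (1 / real (Suc m)) n) < \<infinity>" for n by (simp add: emeasure_eq_measure)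
    let ?q = "exp (-2 * (1 / real (Suc m))^2)"
    have q: "?q < 1" "0 \<le> ?q" by auto
    show "summable (\<lambda>n. measure M (A (1 / real (Suc m)) n))"
    proof (rule summable_comparison_test)
      show "\<exists>N. \<forall>n\<ge>N. norm (measure M (A (1 / real (Suc m)) n)) \<le> 2 * ?q ^ n"
        using bound[of "1 / real (Suc m)"] by auto
      show "summable (\<lambda>n. 2 * ?q ^ n)"
        using q by (intro summable_mult summable_geometric) auto
    qed
  qed
  have "AE w in M. \<forall>m. eventually (\<lambda>n. w \<in> space M - A (1 / real (Suc m)) n) sequentially"
    using ae by (simp add: AE_all_countable)
  then show ?thesis
  proof (rule AE_mp[OF _ AE_I2], intro impI)
    fix w assume w: "w \<in> space M"
      and ev: "\<forall>m. eventually (\<lambda>n. w \<in> space M - A (1 / real (Suc m)) n) sequentially"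
    show "(\<lambda>T. (1 / real T) * (\<Sum>t<T. Y t w)) \<longlonglongrightarrow> mu"
    proof (rule LIMSEQ_I)
      fix r :: real assume r: "0 < r"
      obtain m where m: "inverse (real (Suc m)) < r" using reals_Archimedean[OF r] by blast
      have "eventually (\<lambda>n. w \<in> space M - A (1 / real (Suc m)) n \<and> n > 0) sequentially"
        using ev eventually_gt_at_top[of 0] eventually_conj by blast
      then obtain N where N: "\<And>n. n \<ge> N \<Longrightarrow> w \<in> space M - A (1 / real (Suc m)) n \<and> n > 0"
        by (auto simp: eventually_sequentially)
      show "\<exists>N. \<forall>n\<ge>N. norm ((1 / real n) * (\<Sum>t<n. Y t w) - mu) < r"
      proof (intro exI allI impI)
        fix n assume "n \<ge> N"
        from N[OF this] w have n: "n > 0" and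
          lt: "\<bar>(\<Sum>t<n. Y t w) - real n * mu\<bar> < real n * (1 / real (Suc m))"
          unfolding A_def by auto
        have "(1 / real n) * (\<Sum>t<n. Y t w) - mu = ((\<Sum>t<n. Y t w) - real n * mu) / real n"
          using n by (simp add: field_simps)
        then have "norm ((1 / real n) * (\<Sum>t<n. Y t w) - mu) = \<bar>(\<Sum>t<n. Y t w) - real n * mu\<bar> / real n"
          by simp
        also have "\<dots> < 1 / real (Suc m)"
          using lt n by (simp add: divide_less_eq mult.commute)
        also have "\<dots> < r" using m by (simp add: inverse_eq_divide)
        finally show "norm ((1 / real n) * (\<Sum>t<n. Y t w) - mu) < r" .
      qed
    qed
  qed
qed


lemma det_on_insert:
  assumes "finite S" "a \<notin> S"
  shows "det_on (insert a S) K = (\<Sum>b\<in>insert a S. \<Sum>q\<in>{p. p permutes S}.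
     of_int (sign (Transposition.transpose a b \<circ> q)) * (\<Prod>i\<in>insert a S. K i ((Transposition.transpose a b \<circ> q) i)))"
  unfolding det_on_def by (rule sum_over_permutations_insert[OF assms])

lemma sign_tq: "q permutes S \<Longrightarrow> finite S \<Longrightarrow> sign (Transposition.transpose a b \<circ> q) = (if a = b then 1 else -1) * sign q"
  by (subst sign_compose) (auto simp: sign_swap_id intro: permutation_swap_id permutation_permutes[THEN iffD2])

lemma det_on_empty: "det_on {} K = 1"
  unfolding det_on_def by (simp add: permutes_empty)

lemma det_on_1: "det_on {a} K = K a a"
  using det_on_insert[of "{}" a K] by (simp add: permutes_empty)

lemma det_on_2: assumes "a \<noteq> b" shows "det_on {a, b} K = K a a * K b b - K a b * K b a"
  using assms det_on_insert[of "{b}" a K]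
  by (simp add: permutes_sing sign_swap_id sign_tq permutation_swap_id)

lemma det_on_3: assumes "a \<noteq> b" "a \<noteq> c" "b \<noteq> c"
  shows "det_on {a, b, c} K = K a a * K b b * K c c - K a a * K b c * K c b - K a b * K b a * K c c
     + K a b * K b c * K c a + K a c * K b a * K c b - K a c * K b b * K c a"
proof -
  have "det_on {a, b, c} K = (\<Sum>x\<in>{a,b,c}. \<Sum>q\<in>{p. p permutes {b,c}}.
     of_int (sign (Transposition.transpose a x \<circ> q)) * (\<Prod>i\<in>{a,b,c}. K i ((Transposition.transpose a x \<circ> q) i)))"
    using det_on_insert[of "{b,c}" a K] assms by simp
  also have "\<dots> = (\<Sum>x\<in>{a,b,c}. \<Sum>y\<in>{b,c}.
     of_int (sign (Transposition.transpose a x \<circ> Transposition.transpose b y))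
        * (\<Prod>i\<in>{a,b,c}. K i ((Transposition.transpose a x \<circ> Transposition.transpose b y) i)))"
  proof (rule sum.cong[OF refl])
    fix x
    show "(\<Sum>q\<in>{p. p permutes {b,c}}.
     of_int (sign (Transposition.transpose a x \<circ> q)) * (\<Prod>i\<in>{a,b,c}. K i ((Transposition.transpose a x \<circ> q) i))) = 
     (\<Sum>y\<in>{b,c}. of_int (sign (Transposition.transpose a x \<circ> Transposition.transpose b y))
        * (\<Prod>i\<in>{a,b,c}. K i ((Transposition.transpose a x \<circ> Transposition.transpose b y) i)))"
      using sum_over_permutations_insert[of "{c}" b "\<lambda>q. of_int (sign (Transposition.transpose a x \<circ> q)) * (\<Prod>i\<in>{a,b,c}. K i ((Transposition.transpose a x \<circ> q) i))"] assms
      by (simp add: permutes_sing)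
  qed
  also have "\<dots> = K a a * K b b * K c c - K a a * K b c * K c b - K a b * K b a * K c c
     + K a b * K b c * K c a + K a c * K b a * K c b - K a c * K b b * K c a"
    using assms
    by (simp add: sign_compose permutation_swap_id sign_swap_id Transposition.transpose_def algebra_simps)
  finally show ?thesis .
qed


lemma det_part:
  fixes X :: "nat \<Rightarrow> 'a \<Rightarrow> nat set" and w :: 'a and d :: nat and K :: "nat \<Rightarrow> nat \<Rightarrow> real"
  assumes "d \<ge> 3"
    and sym: "\<forall>i\<in>{1..d}. \<forall>j\<in>{1..d}. K i j = K j i"
    and nonzero: "\<forall>i\<in>{1..d}. \<forall>j\<in>{1..d}. K i j \<noteq> 0"
    and pos: "\<forall>i\<in>{2..d}. K 1 i > 0"
    and conv: "\<forall>s. s \<subseteq> {1..d} \<longrightarrow>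
       (\<lambda>T. (1 / real T) * (\<Sum>t<T. if s \<subseteq> X t w then 1 else 0)) \<longlonglongrightarrow> det_on s K"
  shows "(\<forall>i\<in>{1..d}. \<forall>j\<in>{1..d}. (\<lambda>T. K_hat X T w i j) \<longlonglongrightarrow> K i j)
       \<and> eventually (\<lambda>T.
            (\<forall>i\<in>{1..d}. \<forall>j\<in>{1..d}. i < j \<longrightarrow> negcov_hat X T w i j \<ge> 0)
          \<and> (\<forall>i\<in>{1..d}. \<forall>j\<in>{1..d}. sgn (K_hat X T w i j) = sgn (K i j))) sequentially"
proof -
  have D: "(\<lambda>T. Kdiag_hat X T w i) \<longlonglongrightarrow> K i i" if i: "i \<in> {1..d}" for i
  proof -
    have "Kdiag_hat X T w i = (1 / real T) * (\<Sum>t<T. if {i} \<subseteq> X t w then 1 else 0)" for T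
      by (simp add: Kdiag_hat_def xval_def)
    then show ?thesis using conv[rule_format, of "{i}"] i by (simp add: det_on_1)
  qed
  have NC: "(\<lambda>T. negcov_hat X T w i j) \<longlonglongrightarrow> (K i j)^2"
    if i: "i \<in> {1..d}" and j: "j \<in> {1..d}" and ij: "i \<noteq> j" for i j
  proof -
    have pw: "xval X t i w * xval X t j w = (if {i, j} \<subseteq> X t w then 1 else 0)" for t
      by (simp add: xval_def)
    have eq: "negcov_hat X T w i j = Kdiag_hat X T w i * Kdiag_hat X T w j
       - (1 / real T) * (\<Sum>t<T. if {i, j} \<subseteq> X t w then 1 else 0)" for T
      by (simp add: negcov_hat_def pw)
    have c: "(\<lambda>T. (1 / real T) * (\<Sum>t<T. if {i, j} \<subseteq> X t w then 1 else 0)) \<longlonglongrightarrow> K i i * K j j - K i j * K j i"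
      using conv[rule_format, of "{i,j}"] i j ij by (simp add: det_on_2)
    have "(\<lambda>T. negcov_hat X T w i j) \<longlonglongrightarrow> K i i * K j j - (K i i * K j j - K i j * K j i)"
      unfolding eq by (intro tendsto_diff tendsto_mult D i j c)
    then show ?thesis using sym i j by (simp add: power2_eq_square)
  qed
  have AB: "(\<lambda>T. absK_hat X T w i j) \<longlonglongrightarrow> \<bar>K i j\<bar>"
    if i: "i \<in> {1..d}" and j: "j \<in> {1..d}" and ij: "i \<noteq> j" for i j
  proof -
    have "(\<lambda>T. sqrt (negcov_hat X T w i j)) \<longlonglongrightarrow> sqrt ((K i j)^2)"
      by (intro tendsto_real_sqrt NC i j ij)
    then show ?thesis by (simp add: absK_hat_def)
  qed
  have SG: "eventually (\<lambda>T. sgn_hat X T w i j = sgn (K i j)) sequentially"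
    if i: "i \<in> {2..d}" and j: "j \<in> {2..d}" and ij: "i \<noteq> j" for i j
  proof -
    have i1: "i \<in> {1..d}" "1 \<noteq> i" and j1: "j \<in> {1..d}" "1 \<noteq> j" and one: "(1::nat) \<in> {1..d}"
      using i j \<open>d \<ge> 3\<close> by auto
    have pw: "xval X t 1 w * xval X t i w * xval X t j w = (if {1, i, j} \<subseteq> X t w then 1 else 0)" for t
      by (simp add: xval_def)
    have eq: "(1 / real T) * (\<Sum>t<T. xval X t 1 w * xval X t i w * xval X t j w)
       = (1 / real T) * (\<Sum>t<T. if {1, i, j} \<subseteq> X t w then 1 else 0)" for T
      by (simp only: pw)
    have c: "(\<lambda>T. (1 / real T) * (\<Sum>t<T. xval X t 1 w * xval X t i w * xval X t j w)) \<longlonglongrightarrow> det_on {1, i, j} K"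
      unfolding eq using conv[rule_format, of "{1,i,j}"] i j by auto
    define E where "E = (\<lambda>T. (1 / real T) * (\<Sum>t<T. xval X t 1 w * xval X t i w * xval X t j w)
      - Kdiag_hat X T w 1 * Kdiag_hat X T w i * Kdiag_hat X T w j
      + Kdiag_hat X T w 1 * (absK_hat X T w i j)\<^sup>2
      + Kdiag_hat X T w i * (absK_hat X T w 1 j)\<^sup>2
      + Kdiag_hat X T w j * (absK_hat X T w 1 i)\<^sup>2)"
    have "E \<longlonglongrightarrow> det_on {1, i, j} K - K 1 1 * K i i * K j j + K 1 1 * \<bar>K i j\<bar>^2
       + K i i * \<bar>K 1 j\<bar>^2 + K j j * \<bar>K 1 i\<bar>^2"
      unfolding E_def
      by (intro tendsto_add tendsto_diff tendsto_mult tendsto_power c D AB i1 j1 one ij) 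
    also have "det_on {1, i, j} K - K 1 1 * K i i * K j j + K 1 1 * \<bar>K i j\<bar>^2
       + K i i * \<bar>K 1 j\<bar>^2 + K j j * \<bar>K 1 i\<bar>^2 = 2 * K 1 i * K 1 j * K i j"
      using sym i1 j1 one ij by (simp add: det_on_3 power2_eq_square algebra_simps)
    finally have E: "E \<longlonglongrightarrow> 2 * K 1 i * K 1 j * K i j" .
    have p: "K 1 i > 0" "K 1 j > 0" using pos i j by auto
    have sE: "sgn_hat X T w i j = sgn (E T)" for T by (simp add: sgn_hat_def E_def)
    show ?thesis
    proof (cases "K i j > 0")
      case True
      then have "2 * K 1 i * K 1 j * K i j > 0" using p by simp
      from order_tendstoD(1)[OF E this] show ?thesis
        by eventually_elim (simp add: sE True)
    next
      case False
      then have "K i j < 0" using nonzero i1 j1 by force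
      then have "2 * K 1 i * K 1 j * K i j < 0" using p by (simp add: mult_pos_neg)
      from order_tendstoD(2)[OF E this] show ?thesis
        by eventually_elim (simp add: sE \<open>K i j < 0\<close>)
    qed
  qed
  have KU: "(\<lambda>T. Kupper_hat X T w i j) \<longlonglongrightarrow> K i j"
    if i: "i \<in> {1..d}" and j: "j \<in> {1..d}" and ij: "i < j" for i j
  proof (cases "i = 1")
    case True
    have "K 1 j > 0" using pos j ij True by auto
    then show ?thesis using AB[of 1 j] j ij True by (simp add: Kupper_hat_def)
  next
    case False
    have "(\<lambda>T. sgn_hat X T w i j * absK_hat X T w i j) \<longlonglongrightarrow> sgn (K i j) * \<bar>K i j\<bar>"
    proof (rule Lim_transform_eventually)
      show "(\<lambda>T. sgn (K i j) * absK_hat X T w i j) \<longlonglongrightarrow> sgn (K i j) * \<bar>K i j\<bar>"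
        by (intro tendsto_mult tendsto_const AB i j) (use ij in auto)
      show "\<forall>\<^sub>F T in sequentially. sgn (K i j) * absK_hat X T w i j = sgn_hat X T w i j * absK_hat X T w i j"
        using SG[of i j] i j ij False by (auto elim: eventually_mono)
    qed
    then show ?thesis using False by (simp add: Kupper_hat_def sgn_mult_abs)
  qed
  have KH: "(\<lambda>T. K_hat X T w i j) \<longlonglongrightarrow> K i j" if i: "i \<in> {1..d}" and j: "j \<in> {1..d}" for i j
  proof -
    consider "i = j" | "i < j" | "j < i" by linarith
    then show ?thesis
    proof cases
      case 1 then show ?thesis using D[OF i] by (simp add: K_hat_def)
    next
      case 2 then show ?thesis using KU[OF i j] by (simp add: K_hat_def min_def max_def)
    next
      case 3 then show ?thesis using KU[OF j i] sym i j by (simp add: K_hat_def min_def max_def)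
    qed
  qed
  have ev1: "eventually (\<lambda>T. \<forall>i\<in>{1..d}. \<forall>j\<in>{1..d}. i < j \<longrightarrow> negcov_hat X T w i j \<ge> 0) sequentially"
  proof (intro eventually_ball_finite ballI finite_atLeastAtMost)
    fix i j assume i: "i \<in> {1..d}" and j: "j \<in> {1..d}"
    show "eventually (\<lambda>T. i < j \<longrightarrow> negcov_hat X T w i j \<ge> 0) sequentially"
    proof (cases "i < j")
      case True
      have "(K i j)^2 > 0" using nonzero i j by simp
      from order_tendstoD(1)[OF NC[OF i j] this] True show ?thesis
        by (auto elim: eventually_mono)
    qed simp
  qed
  have ev2: "eventually (\<lambda>T. \<forall>i\<in>{1..d}. \<forall>j\<in>{1..d}. sgn (K_hat X T w i j) = sgn (K i j)) sequentially"
  proof (intro eventually_ball_finite ballI finite_atLeastAtMost)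
    fix i j assume i: "i \<in> {1..d}" and j: "j \<in> {1..d}"
    show "eventually (\<lambda>T. sgn (K_hat X T w i j) = sgn (K i j)) sequentially"
    proof (cases "K i j > 0")
      case True
      from order_tendstoD(1)[OF KH[OF i j] True] show ?thesis
        by eventually_elim (simp add: True)
    next
      case False
      then have n: "K i j < 0" using nonzero i j by force
      from order_tendstoD(2)[OF KH[OF i j] n] show ?thesis
        by eventually_elim (simp add: n)
    qed
  qed
  show ?thesis using KH ev1 ev2 eventually_conj by blast
qed


theorem proposition4:
  fixes M :: "'a measure" and d :: nat and K :: "nat \<Rightarrow> nat \<Rightarrow> real"
    and X :: "nat \<Rightarrow> 'a \<Rightarrow> nat set"
  assumes "prob_space M"
    and "d \<ge> 3"
    and sym: "\<forall>i\<in>{1..d}. \<forall>j\<in>{1..d}. K i j = K j i"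
    and eig: "\<forall>lam. is_eigenvalue d K lam \<longrightarrow> 0 < lam \<and> lam < 1"
    and nonzero: "\<forall>i\<in>{1..d}. \<forall>j\<in>{1..d}. K i j \<noteq> 0"
    and pos: "\<forall>i\<in>{2..d}. K 1 i > 0"
    and indep: "prob_space.indep_vars M (\<lambda>_. count_space (Pow {1..d})) X UNIV"
    and dpp: "\<forall>t. \<forall>s. s \<subseteq> {1..d} \<longrightarrow>
                 measure M {w \<in> space M. s \<subseteq> X t w} = det_on s K"
  shows "(AE w in M. \<forall>i\<in>{1..d}. \<forall>j\<in>{1..d}. (\<lambda>T. K_hat X T w i j) \<longlonglongrightarrow> K i j)
       \<and> (AE w in M. eventually (\<lambda>T.
            (\<forall>i\<in>{1..d}. \<forall>j\<in>{1..d}. i < j \<longrightarrow> negcov_hat X T w i j \<ge> 0)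
          \<and> (\<forall>i\<in>{1..d}. \<forall>j\<in>{1..d}. sgn (K_hat X T w i j) = sgn (K i j))) sequentially)"
proof -
  interpret prob_space M by fact
  have Xm: "X t \<in> measurable M (count_space (Pow {1..d}))" for t
    using indep unfolding indep_vars_def by auto
  have one: "AE w in M. (\<lambda>T. (1 / real T) * (\<Sum>t<T. if s \<subseteq> X t w then 1 else 0)) \<longlonglongrightarrow> det_on s K"
    if s: "s \<subseteq> {1..d}" for s
  proof (rule slln_bounded)
    show "prob_space M" by fact
    show "indep_vars (\<lambda>_. borel) (\<lambda>t w. if s \<subseteq> X t w then 1 else 0 :: real) UNIV"
      by (rule indep_vars_compose2[OF indep, where Y="\<lambda>_ A. if s \<subseteq> A then 1 else 0 :: real"]) simp
    show "(if s \<subseteq> X t w then 1 else 0 :: real) \<in> {0..1}" for t w by simp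
    show "expectation (\<lambda>w. if s \<subseteq> X t w then 1 else 0 :: real) = det_on s K" for t
    proof -
      have S: "{w \<in> space M. s \<subseteq> X t w} \<in> sets M"
      proof -
        have "{w \<in> space M. s \<subseteq> X t w} = X t -` {A \<in> Pow {1..d}. s \<subseteq> A} \<inter> space M"
          using measurable_space[OF Xm] by auto
        also have "\<dots> \<in> sets M" by (rule measurable_sets[OF Xm]) auto
        finally show ?thesis .
      qed
      have "expectation (\<lambda>w. if s \<subseteq> X t w then 1 else 0 :: real)
          = expectation (indicator {w \<in> space M. s \<subseteq> X t w})"
        by (rule Bochner_Integration.integral_cong) (auto simp: indicator_def)
      also have "\<dots> = measure M {w \<in> space M. s \<subseteq> X t w}"
        using S by simp
      also have "\<dots> = det_on s K" using dpp s by auto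
      finally show ?thesis .
    qed
  qed
  have good: "AE w in M. \<forall>s\<in>Pow {1..d}. (\<lambda>T. (1 / real T) * (\<Sum>t<T. if s \<subseteq> X t w then 1 else 0)) \<longlonglongrightarrow> det_on s K"
    by (rule AE_finite_allI) (use one in auto)
  have main: "AE w in M. (\<forall>i\<in>{1..d}. \<forall>j\<in>{1..d}. (\<lambda>T. K_hat X T w i j) \<longlonglongrightarrow> K i j)
       \<and> eventually (\<lambda>T.
            (\<forall>i\<in>{1..d}. \<forall>j\<in>{1..d}. i < j \<longrightarrow> negcov_hat X T w i j \<ge> 0)
          \<and> (\<forall>i\<in>{1..d}. \<forall>j\<in>{1..d}. sgn (K_hat X T w i j) = sgn (K i j))) sequentially"
    using good
  proof (rule AE_mp[OF _ AE_I2], intro impI)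
    fix w assume "\<forall>s\<in>Pow {1..d}. (\<lambda>T. (1 / real T) * (\<Sum>t<T. if s \<subseteq> X t w then 1 else 0)) \<longlonglongrightarrow> det_on s K"
    then show "(\<forall>i\<in>{1..d}. \<forall>j\<in>{1..d}. (\<lambda>T. K_hat X T w i j) \<longlonglongrightarrow> K i j)
       \<and> eventually (\<lambda>T.
            (\<forall>i\<in>{1..d}. \<forall>j\<in>{1..d}. i < j \<longrightarrow> negcov_hat X T w i j \<ge> 0)
          \<and> (\<forall>i\<in>{1..d}. \<forall>j\<in>{1..d}. sgn (K_hat X T w i j) = sgn (K i j))) sequentially"
      by (intro det_part[OF \<open>d \<ge> 3\<close> sym nonzero pos]) auto
  qed
  show ?thesis
    using main by (auto elim: AE_mp[OF _ AE_I2])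
qed

end
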